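(* Let $X$ be a prelength space and $Y$ a metric space. The function $\mathrm{ap}:\mathfrak{C}(X\to Y)\to(\mathfrak{C}(X)\to\mathfrak{C}(Y))$ is uniformly continuous with modulus $\lambda\varepsilon.\varepsilon$; that is, whenever $B'_\varepsilon(f_1,f_2)$ holds in $\mathfrak{C}(X\to Y)$, then $B'_\varepsilon(\mathrm{ap}(f_1)(x),\mathrm{ap}(f_2)(x))$ holds for every $x\in\mathfrak{C}(X)$.
   Context: $\mathbb{Q}^+$ denotes the strictly positive rationals; all $\varepsilon,\delta$ (with indices) range over $\mathbb{Q}^+$. A metric space is a triple $(X,\asymp,B)$ where $\asymp$ is an equivalence relation on $X$ and $B$ assigns to each $\varepsilon\in\mathbb{Q}^+$ a binary relation $B_\varepsilon$ on $X$ respecting $\asymp$, such that: (1) each $B_\varepsilon$ is reflexive; (2) each $B_\varepsilon$ is symmetric; (3) if $B_{\varepsilon_1}(a,b)$ and $B_{\varepsilon_2}(b,c)$ then $B_{\varepsilon_1+\varepsilon_2}(a,c)$; (4) if $B_{\varepsilon+\delta}(a,b)$ for all $\delta$, then $B_\varepsilon(a,b)$; (5) if $B_\varepsilon(a,b)$ for all $\varepsilon$, then $a\asymp b$. A prelength space is a metric space such that for all $a,b,\varepsilon,\delta_1,\delta_2$ with $\varepsilon<\delta_1+\delta_2$ and $B_\varepsilon(a,b)$ there exists $c$ with $B_{\delta_1}(a,c)$ and $B_{\delta_2}(c,b)$. A regular function over a metric space $W$ is a function $x:\mathbb{Q}^+\to W$ such that $B_{\varepsilon_1+\varepsilon_2}(x(\varepsilon_1),x(\varepsilon_2))$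 for all $\varepsilon_1,\varepsilon_2$; $\mathfrak{C}(W)$ is the metric space of regular functions with $x\asymp y$ iff $B_{2\varepsilon}(x(\varepsilon),y(\varepsilon))$ for all $\varepsilon$ and $B'_\varepsilon(x,y)$ iff $B_{\varepsilon+\delta_1+\delta_2}(x(\delta_1),y(\delta_2))$ for all $\delta_1,\delta_2$. A uniformly continuous function $g:X\to Y$ is a pair of a function and a modulus $\mu_g$ with $B^X_{\mu_g(\varepsilon)}(x_1,x_2)\Rightarrow B^Y_\varepsilon(g(x_1),g(x_2))$. For metric spaces $U,V$, $U\to V$ is the metric space of uniformly continuous functions with $B_\varepsilon(g,h)$ iff $B^V_\varepsilon(g(a),h(a))$ for all $a\in U$, and $g\asymp h$ iff $g(a)\asymp h(a)$ for all $a$. $\mathrm{map}(g)(x)=\lambda\varepsilon.\,g(x(\mu_g(\varepsilon)))$, and for $f\in\mathfrak{C}(X\to Y)$, $\mathrm{ap}(f)(x)=\lambda\varepsilon.\,\mathrm{map}(f(\tfrac{\varepsilon}{2}))(x)(\tfrac{\varepsilon}{2})$. *)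

theory Defs
  imports Complex_Main
begin

text \<open>Metric spaces in the sense of the paper: a carrier S, an equivalence relation eq on S,
  and ball relations B e (for positive rationals e) on S respecting eq.
  Positive rationals are modelled as rationals with an explicit positivity guard.\<close>

definition metric_sp :: "'a set \<Rightarrow> ('a \<Rightarrow> 'a \<Rightarrow> bool) \<Rightarrow> (rat \<Rightarrow> 'a \<Rightarrow> 'a \<Rightarrow> bool) \<Rightarrow> bool" where
  "metric_sp S eq B \<longleftrightarrow>
     (\<forall>a\<in>S. eq a a) \<and>
     (\<forall>a\<in>S. \<forall>b\<in>S. eq a b \<longrightarrow> eq b a) \<and>
     (\<forall>a\<in>S. \<forall>b\<in>S. \<forall>c\<in>S. eq a b \<longrightarrow> eq b c \<longrightarrow> eq a c) \<and>
     (\<forall>e>0. \<forall>a\<in>S. \<forall>a'\<in>S. \<forall>b\<in>S. \<forall>b'\<in>S. eq a a' \<longrightarrow> eq b b' \<longrightarrow> B e a b \<longrightarrow> B e a' b') \<and>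
     (\<forall>e>0. \<forall>a\<in>S. B e a a) \<and>
     (\<forall>e>0. \<forall>a\<in>S. \<forall>b\<in>S. B e a b \<longrightarrow> B e b a) \<and>
     (\<forall>e1>0. \<forall>e2>0. \<forall>a\<in>S. \<forall>b\<in>S. \<forall>c\<in>S. B e1 a b \<longrightarrow> B e2 b c \<longrightarrow> B (e1 + e2) a c) \<and>
     (\<forall>e>0. \<forall>a\<in>S. \<forall>b\<in>S. (\<forall>d>0. B (e + d) a b) \<longrightarrow> B e a b) \<and>
     (\<forall>a\<in>S. \<forall>b\<in>S. (\<forall>e>0. B e a b) \<longrightarrow> eq a b)"

definition prelength_sp :: "'a set \<Rightarrow> ('a \<Rightarrow> 'a \<Rightarrow> bool) \<Rightarrow> (rat \<Rightarrow> 'a \<Rightarrow> 'a \<Rightarrow> bool) \<Rightarrow> bool" where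
  "prelength_sp S eq B \<longleftrightarrow> metric_sp S eq B \<and>
     (\<forall>a\<in>S. \<forall>b\<in>S. \<forall>e>0. \<forall>d1>0. \<forall>d2>0. e < d1 + d2 \<longrightarrow> B e a b \<longrightarrow>
        (\<exists>c\<in>S. B d1 a c \<and> B d2 c b))"

text \<open>Regular functions over (S,B): the carrier of the completion.\<close>
definition regular :: "'a set \<Rightarrow> (rat \<Rightarrow> 'a \<Rightarrow> 'a \<Rightarrow> bool) \<Rightarrow> (rat \<Rightarrow> 'a) set" where
  "regular S B = {x. (\<forall>e>0. x e \<in> S) \<and> (\<forall>e1>0. \<forall>e2>0. B (e1 + e2) (x e1) (x e2))}"

definition C_eq :: "(rat \<Rightarrow> 'a \<Rightarrow> 'a \<Rightarrow> bool) \<Rightarrow> (rat \<Rightarrow> 'a) \<Rightarrow> (rat \<Rightarrow> 'a) \<Rightarrow> bool" where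
  "C_eq B x y \<longleftrightarrow> (\<forall>e>0. B (2 * e) (x e) (y e))"

definition C_ball :: "(rat \<Rightarrow> 'a \<Rightarrow> 'a \<Rightarrow> bool) \<Rightarrow> rat \<Rightarrow> (rat \<Rightarrow> 'a) \<Rightarrow> (rat \<Rightarrow> 'a) \<Rightarrow> bool" where
  "C_ball B e x y \<longleftrightarrow> (\<forall>d1>0. \<forall>d2>0. B (e + d1 + d2) (x d1) (y d2))"

definition ucfun :: "'a set \<Rightarrow> (rat \<Rightarrow> 'a \<Rightarrow> 'a \<Rightarrow> bool) \<Rightarrow> 'b set \<Rightarrow> (rat \<Rightarrow> 'b \<Rightarrow> 'b \<Rightarrow> bool)
    \<Rightarrow> (('a \<Rightarrow> 'b) \<times> (rat \<Rightarrow> rat)) set" where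
  "ucfun SX BX SY BY = {(g, \<mu>). (\<forall>a\<in>SX. g a \<in> SY) \<and> (\<forall>e>0. \<mu> e > 0) \<and>
      (\<forall>e>0. \<forall>a1\<in>SX. \<forall>a2\<in>SX. BX (\<mu> e) a1 a2 \<longrightarrow> BY e (g a1) (g a2))}"

definition fun_eq :: "'a set \<Rightarrow> ('b \<Rightarrow> 'b \<Rightarrow> bool) \<Rightarrow> (('a \<Rightarrow> 'b) \<times> (rat \<Rightarrow> rat))
    \<Rightarrow> (('a \<Rightarrow> 'b) \<times> (rat \<Rightarrow> rat)) \<Rightarrow> bool" where
  "fun_eq SX eqY g h \<longleftrightarrow> (\<forall>a\<in>SX. eqY (fst g a) (fst h a))"

definition fun_ball :: "'a set \<Rightarrow> (rat \<Rightarrow> 'b \<Rightarrow> 'b \<Rightarrow> bool) \<Rightarrow> rat \<Rightarrow> (('a \<Rightarrow> 'b) \<times> (rat \<Rightarrow> rat))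
    \<Rightarrow> (('a \<Rightarrow> 'b) \<times> (rat \<Rightarrow> rat)) \<Rightarrow> bool" where
  "fun_ball SX BY e g h \<longleftrightarrow> (\<forall>a\<in>SX. BY e (fst g a) (fst h a))"

definition cmap :: "(('a \<Rightarrow> 'b) \<times> (rat \<Rightarrow> rat)) \<Rightarrow> (rat \<Rightarrow> 'a) \<Rightarrow> (rat \<Rightarrow> 'b)" where
  "cmap g x = (\<lambda>e. fst g (x (snd g e)))"

definition cap :: "(rat \<Rightarrow> (('a \<Rightarrow> 'b) \<times> (rat \<Rightarrow> rat))) \<Rightarrow> (rat \<Rightarrow> 'a) \<Rightarrow> (rat \<Rightarrow> 'b)" where
  "cap f x = (\<lambda>e. cmap (f (e / 2)) x (e / 2))"

end

theory Submission
  imports Defs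
begin

theorem theorem28:
  fixes SX :: "'a set" and eqX :: "'a \<Rightarrow> 'a \<Rightarrow> bool" and BX :: "rat \<Rightarrow> 'a \<Rightarrow> 'a \<Rightarrow> bool"
    and SY :: "'b set" and eqY :: "'b \<Rightarrow> 'b \<Rightarrow> bool" and BY :: "rat \<Rightarrow> 'b \<Rightarrow> 'b \<Rightarrow> bool"
    and f1 f2 :: "rat \<Rightarrow> (('a \<Rightarrow> 'b) \<times> (rat \<Rightarrow> rat))" and x :: "rat \<Rightarrow> 'a" and e :: rat
  assumes "prelength_sp SX eqX BX"
    and "metric_sp SY eqY BY"
    and "f1 \<in> regular (ucfun SX BX SY BY) (fun_ball SX BY)"
    and "f2 \<in> regular (ucfun SX BX SY BY) (fun_ball SX BY)"
    and "e > 0"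
    and "C_ball (fun_ball SX BY) e f1 f2"
    and "x \<in> regular SX BX"
  shows "C_ball BY e (cap f1 x) (cap f2 x)"
  unfolding C_ball_def
proof (intro allI impI)
  fix d1 d2 :: rat assume d1: "d1 > 0" and d2: "d2 > 0"
  have pl: "\<forall>a\<in>SX. \<forall>b\<in>SX. \<forall>e>0. \<forall>d1>0. \<forall>d2>0. e < d1 + d2 \<longrightarrow> BX e a b \<longrightarrow>
        (\<exists>c\<in>SX. BX d1 a c \<and> BX d2 c b)"
    using assms(1) unfolding prelength_sp_def by blast
  have triY: "\<And>e1 e2 a b c. e1 > 0 \<Longrightarrow> e2 > 0 \<Longrightarrow> a \<in> SY \<Longrightarrow> b \<in> SY \<Longrightarrow> c \<in> SY \<Longrightarrow>
      BY e1 a b \<Longrightarrow> BY e2 b c \<Longrightarrow> BY (e1 + e2) a c"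
    using assms(2) unfolding metric_sp_def by blast
  have clY: "\<And>e a b. e > 0 \<Longrightarrow> a \<in> SY \<Longrightarrow> b \<in> SY \<Longrightarrow> (\<forall>d>0. BY (e + d) a b) \<Longrightarrow> BY e a b"
    using assms(2) unfolding metric_sp_def by blast
  define g1 where "g1 = fst (f1 (d1/2))"
  define u1 where "u1 = snd (f1 (d1/2))"
  define g2 where "g2 = fst (f2 (d2/2))"
  define u2 where "u2 = snd (f2 (d2/2))"
  have h1: "(g1, u1) \<in> ucfun SX BX SY BY" using assms(3) d1 unfolding g1_def u1_def regular_def by auto
  have h2: "(g2, u2) \<in> ucfun SX BX SY BY" using assms(4) d2 unfolding g2_def u2_def regular_def by auto
  have g1S: "\<And>a. a \<in> SX \<Longrightarrow> g1 a \<in> SY" and u1p: "\<And>e. e > 0 \<Longrightarrow> u1 e > 0"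
    and g1c: "\<And>e a b. e > 0 \<Longrightarrow> a \<in> SX \<Longrightarrow> b \<in> SX \<Longrightarrow> BX (u1 e) a b \<Longrightarrow> BY e (g1 a) (g1 b)"
    using h1 unfolding ucfun_def by auto
  have g2S: "\<And>a. a \<in> SX \<Longrightarrow> g2 a \<in> SY" and u2p: "\<And>e. e > 0 \<Longrightarrow> u2 e > 0"
    and g2c: "\<And>e a b. e > 0 \<Longrightarrow> a \<in> SX \<Longrightarrow> b \<in> SX \<Longrightarrow> BX (u2 e) a b \<Longrightarrow> BY e (g2 a) (g2 b)"
    using h2 unfolding ucfun_def by auto
  have mid: "\<And>c. c \<in> SX \<Longrightarrow> BY (e + d1/2 + d2/2) (g1 c) (g2 c)"
    using assms(6) d1 d2 unfolding C_ball_def fun_ball_def g1_def g2_def by auto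
  define m1 where "m1 = u1 (d1/2)"
  define m2 where "m2 = u2 (d2/2)"
  have m1p: "m1 > 0" using u1p d1 m1_def by simp
  have m2p: "m2 > 0" using u2p d2 m2_def by simp
  define a where "a = x m1"
  define b where "b = x m2"
  have aS: "a \<in> SX" and bS: "b \<in> SX" and ab: "BX (m1 + m2) a b"
    using assms(7) m1p m2p unfolding a_def b_def regular_def by auto
  have lhs: "cap f1 x d1 = g1 a" and rhs: "cap f2 x d2 = g2 b"
    unfolding cap_def cmap_def g1_def a_def m1_def u1_def g2_def b_def m2_def u2_def by simp_all
  have "BY (e + d1 + d2) (g1 a) (g2 b)"
  proof (rule clY)
    show "e + d1 + d2 > 0" using assms(5) d1 d2 by simp
    show "g1 a \<in> SY" "g2 b \<in> SY" using aS bS g1S g2S by auto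
    show "\<forall>d>0. BY (e + d1 + d2 + d) (g1 a) (g2 b)"
    proof (intro allI impI)
      fix d :: rat assume dp: "d > 0"
      define s where "s = u2 d / 2"
      have sp: "s > 0" using u2p[OF dp] unfolding s_def by simp
      obtain c where cS: "c \<in> SX" and ac: "BX m1 a c" and cb: "BX (m2 + s) c b"
        using pl aS bS m1p m2p sp ab by (metis add_pos_pos less_add_same_cancel1 add.assoc)
      obtain c' where c'S: "c' \<in> SX" and cc': "BX m2 c c'" and c'b: "BX (2 * s) c' b"
        using pl cS bS m2p sp cb
        by (metis add_pos_pos add_less_cancel_left mult_2 less_add_same_cancel1)
      have 1: "BY (d1/2) (g1 a) (g1 c)" using g1c[OF _ aS cS] ac d1 m1_def by simp
      have 2: "BY (e + d1/2 + d2/2) (g1 c) (g2 c)" using mid cS by simp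
      have 3: "BY (d2/2) (g2 c) (g2 c')" using g2c[OF _ cS c'S] cc' d2 m2_def by simp
      have 4: "BY d (g2 c') (g2 b)" using g2c[OF _ c'S bS] c'b dp s_def by simp
      have p12: "d1/2 > 0" "e + d1/2 + d2/2 > 0" "d2/2 > 0" using d1 d2 assms(5) by simp_all
      have A: "BY (d1/2 + (e + d1/2 + d2/2)) (g1 a) (g2 c)"
        by (rule triY[OF p12(1) p12(2) g1S[OF aS] g1S[OF cS] g2S[OF cS] 1 2])
      have B: "BY (d1/2 + (e + d1/2 + d2/2) + d2/2) (g1 a) (g2 c')"
        by (rule triY[OF _ p12(3) g1S[OF aS] g2S[OF cS] g2S[OF c'S] A 3]) (use p12 in simp)
      have "BY (d1/2 + (e + d1/2 + d2/2) + d2/2 + d) (g1 a) (g2 b)"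
        by (rule triY[OF _ dp g1S[OF aS] g2S[OF c'S] g2S[OF bS] B 4]) (use p12 in simp)
      moreover have "d1/2 + (e + d1/2 + d2/2) + d2/2 + d = e + d1 + d2 + d" by (simp add: field_simps)
      ultimately show "BY (e + d1 + d2 + d) (g1 a) (g2 b)" by metis
    qed
  qed
  then show "BY (e + d1 + d2) (cap f1 x d1) (cap f2 x d2)" using lhs rhs by simp
qed

end
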